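(* Let $a$ be a positive real number and $k\in\mathbb{N}$, and assume the integrals below converge. Then \[ \lim_{k\to\infty}\int_{[0,\infty)^{2k}}\frac{\cos\left(\sum_{n=1}^{2k}(-1)^{n+1}x_n\right)}{\sum_{n=1}^k\frac{x_{2n}}{a+n-1}+\sum_{n=1}^k\frac{x_{2n-1}}{a+n-1}}\prod_{n=1}^{2k}dx_n=\frac{1}{2}\sqrt{\pi}\,\frac{\Gamma\left(a+\frac12\right)}{\Gamma(a)}, \] and, for every $k\in\mathbb{N}$, \[ \int_{[0,\infty)^{2k}}\frac{\sin\left(\sum_{n=1}^{2k}(-1)^{n+1}x_n\right)}{\sum_{n=1}^k\frac{x_{2n}}{a+n-1}+\sum_{n=1}^k\frac{x_{2n-1}}{a+n-1}}\prod_{n=1}^{2k}dx_n=0. \]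
   Context: $\Gamma$ denotes Euler's gamma function. *)

theory Defs
  imports "HOL-Analysis.Analysis" "HOL-Probability.Probability"
begin

text \<open>Points of [0,oo)^(2k) are functions x :: nat => real, coordinates x 0, ..., x (2k-1)
  (0-indexed: x_n of the paper is x (n-1)).\<close>

definition num_arg :: "nat \<Rightarrow> (nat \<Rightarrow> real) \<Rightarrow> real" where
  "num_arg k x = (\<Sum>i<2*k. (-1)^i * x i)"

definition denom :: "real \<Rightarrow> nat \<Rightarrow> (nat \<Rightarrow> real) \<Rightarrow> real" where
  "denom a k x = (\<Sum>m<k. x (2*m+1) / (a + real m)) + (\<Sum>m<k. x (2*m) / (a + real m))"

definition cos_integrand :: "real \<Rightarrow> nat \<Rightarrow> (nat \<Rightarrow> real) \<Rightarrow> real" where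
  "cos_integrand a k x = cos (num_arg k x) / denom a k x"

definition sin_integrand :: "real \<Rightarrow> nat \<Rightarrow> (nat \<Rightarrow> real) \<Rightarrow> real" where
  "sin_integrand a k x = sin (num_arg k x) / denom a k x"

definition cube :: "nat \<Rightarrow> real \<Rightarrow> (nat \<Rightarrow> real) measure" where
  "cube k R = PiM {..<2*k} (\<lambda>_. restrict_space lborel {0..R})"

text \<open>Improper integral over [0,oo)^(2k): limit of the integrals over [0,R]^(2k), R -> oo.\<close>
definition improper_convergent :: "nat \<Rightarrow> ((nat \<Rightarrow> real) \<Rightarrow> real) \<Rightarrow> bool" where
  "improper_convergent k f \<longleftrightarrow>
     (\<forall>R\<ge>0. integrable (cube k R) f) \<and>
     (\<exists>L. ((\<lambda>R. integral\<^sup>L (cube k R) f) \<longlongrightarrow> L) at_top)"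

definition improper_integral :: "nat \<Rightarrow> ((nat \<Rightarrow> real) \<Rightarrow> real) \<Rightarrow> real" where
  "improper_integral k f = Lim at_top (\<lambda>R. integral\<^sup>L (cube k R) f)"

end

theory Submission
  imports Defs
begin

lemma base_int:
  fixes c :: real assumes c: "c > 0"
  shows "has_bochner_integral lborel (\<lambda>t. indicator {0..} t * (1 / (t^2 + c^2))) (pi / (2*c))"
proof -
  have lim1: "LIM t at_top. inverse c * t :> at_top"
    by (rule filterlim_tendsto_pos_mult_at_top[OF tendsto_const]) (use c in \<open>auto intro: filterlim_ident\<close>)
  have "(\<integral>\<^sup>+t. ennreal (1 / (t^2 + c^2)) * indicator {0..} t \<partial>lborel) = pi/2/c - arctan (inverse c * 0)/c"
  proof (rule nn_integral_FTC_atLeast)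
    show "((\<lambda>t. arctan (inverse c * t)/c) \<longlongrightarrow> pi/2/c) at_top"
      using c by (intro tendsto_intros filterlim_compose[OF tendsto_arctan_at_top lim1]) auto
    fix x :: real
    show "DERIV (\<lambda>t. arctan (inverse c * t)/c) x :> 1 / (x^2 + c^2)"
      proof -
      have "x^2 + c^2 > 0" using c by (simp add: add_nonneg_pos)
      then have h2: "c * (c * (c * c)) + c * (c * (x * x)) > 0"
        using c by (simp add: mult_pos_pos flip: distrib_left power2_eq_square)
      show ?thesis using c h2 by (auto intro!: derivative_eq_intros simp: field_simps power2_eq_square)
    qed
    show "0 \<le> 1 / (x^2 + c^2)" by (simp add: add_nonneg_nonneg)
  qed auto
  then have "(\<integral>\<^sup>+t. ennreal (indicator {0..} t * (1 / (t^2 + c^2))) \<partial>lborel) = ennreal (pi/(2*c))"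
    proof -
    assume h: "(\<integral>\<^sup>+t. ennreal (1 / (t^2 + c^2)) * indicator {0..} t \<partial>lborel) = pi/2/c - arctan (inverse c * 0)/c"
    have eq: "\<And>t. ennreal (indicator {0..} t * (1/(t^2+c^2))) = ennreal (1/(t^2+c^2)) * indicator {0..} t"
      by (simp split: split_indicator)
    show ?thesis unfolding eq h by simp
  qed
  then show ?thesis
    by (intro has_bochner_integral_nn_integral) (use c in auto)
qed

definition Pk :: "real \<Rightarrow> nat \<Rightarrow> real \<Rightarrow> real" where
  "Pk a k t = (\<Prod>m<k. 1 / (t^2 + (a + real m)^2))"

definition Kc :: "real \<Rightarrow> nat \<Rightarrow> real" where
  "Kc a n = pi/2 * pochhammer (1/2) n / (pochhammer a (Suc n) * pochhammer (a+1/2) n * fact n)"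

lemma Pk_rec:
  fixes a t :: real assumes a: "a > 0"
  shows "Pk a (Suc (Suc n)) t * ((real n + 1) * (2*a + real n + 1)) = Pk a (Suc n) t - Pk (a+1) (Suc n) t"
proof -
  define Q where "Q = Pk (a+1) n t"
  have 1: "Pk a (Suc n) t = Q / (t^2 + a^2)"
    unfolding Pk_def Q_def by (subst prod.lessThan_Suc_shift) (simp add: add_ac)
  have 2: "Pk (a+1) (Suc n) t = Q / (t^2 + (a + real n + 1)^2)"
    unfolding Pk_def Q_def by (simp add: add_ac)
  have 3: "Pk a (Suc (Suc n)) t = Pk a (Suc n) t / (t^2 + (a + real n + 1)^2)"
    unfolding Pk_def by (simp add: add_ac)
  have p1: "t^2 + a^2 > 0" using a by (simp add: add_nonneg_pos)
  have p2: "t^2 + (a + real n + 1)^2 > 0" using a by (simp add: add_nonneg_pos)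
  have gen: "\<And>(x::real) y z. x \<noteq> 0 \<Longrightarrow> y \<noteq> 0 \<Longrightarrow> z/x/y*(y-x) = z/x - z/y"
    by (simp add: field_simps)
  have c: "(real n + 1) * (2*a + real n + 1) = (t^2 + (a + real n + 1)^2) - (t^2 + a^2)"
    by (simp add: power2_eq_square algebra_simps)
  show ?thesis unfolding 3 1 2 c by (rule gen) (use p1 p2 in auto)
qed

lemma Kc_rec:
  fixes a :: real assumes a: "a > 0"
  shows "Kc a (Suc n) * ((real n + 1) * (2*a + real n + 1)) = Kc a n - Kc (a+1) n"
proof -
  define X where "X = pochhammer a (Suc n)"
  define Y where "Y = pochhammer (a+1/2) n"
  define Z where "Z = pochhammer (1/2::real) n"
  have X: "X > 0" unfolding X_def using a by (intro pochhammer_pos) 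
  have Y: "Y > 0" unfolding Y_def using a by (intro pochhammer_pos) simp
  have Z: "Z > 0" unfolding Z_def by (intro pochhammer_pos) simp
  have e1: "pochhammer a (Suc (Suc n)) = X * (a + real n + 1)"
    unfolding X_def by (subst pochhammer_Suc) (simp add: add_ac)
  have e2: "pochhammer (a+1/2) (Suc n) = Y * (a + real n + 1/2)"
    unfolding Y_def by (subst pochhammer_Suc) (simp add: add_ac)
  have e3: "pochhammer (1/2::real) (Suc n) = Z * (real n + 1/2)"
    unfolding Z_def by (subst pochhammer_Suc) (simp add: add_ac)
  have e4: "pochhammer (a+1) (Suc n) = X * (a + real n + 1) / a"
    using e1 a by (subst (asm) pochhammer_rec) (simp add: field_simps)
  have e5: "pochhammer (a+1+1/2) n = Y * (a + real n + 1/2) / (a + 1/2)"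
    using e2 a by (subst (asm) pochhammer_rec) (simp add: field_simps add_ac)
  have K0: "Kc a n = pi/2 * Z / (X * Y * fact n)" unfolding Kc_def X_def Y_def Z_def ..
  have K1: "Kc a (Suc n) = pi/2 * (Z * (real n + 1/2)) / (X * (a + real n + 1) * (Y * (a + real n + 1/2)) * (fact n * (real n + 1)))"
    unfolding Kc_def e1 e2 e3 by (simp add: add_ac)
  have K2: "Kc (a+1) n = pi/2 * Z / (X * (a + real n + 1) / a * (Y * (a + real n + 1/2) / (a + 1/2)) * fact n)"
    unfolding Kc_def Z_def[symmetric] e4 e5 by (simp add: add_ac)
  have f: "fact n > (0::real)" by simp
  have q1: "a + real n + 1 > 0" "a + real n + 1/2 > 0" "a + 1/2 > 0" using a by auto
  define F where "F = (fact n :: real)"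
  define A where "A = a + real n + 1"
  define B where "B = a + real n + 1/2"
  have AB: "A > 0" "B > 0" "a + 1/2 > 0" "F > 0" using q1 f unfolding A_def B_def F_def by auto
  have "pi/2 * (Z * (real n + 1/2)) / (X * A * (Y * B) * (F * (real n + 1))) * ((real n + 1) * (2*a + real n + 1))
     = pi/2 * Z / (X * Y * F) - pi/2 * Z / (X * A / a * (Y * B / (a + 1/2)) * F)"
  proof -
    have key: "(real n + 1/2) * (2*a + real n + 1) = A * B - a * (a + 1/2)"
      unfolding A_def B_def by (simp add: field_simps power2_eq_square)
    have l: "pi/2 * (Z * (real n + 1/2)) / (X * A * (Y * B) * (F * (real n + 1))) * ((real n + 1) * (2*a + real n + 1))
       = pi/2 * Z / (X * Y * F) * ((real n + 1/2) * (2*a + real n + 1) / (A * B))"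
    proof -
      have n1: "real n + 1 \<noteq> 0" by simp
      have g: "\<And>c X A Y B F N M::real. X\<noteq>0 \<Longrightarrow> A\<noteq>0 \<Longrightarrow> Y\<noteq>0 \<Longrightarrow> B\<noteq>0 \<Longrightarrow> F\<noteq>0 \<Longrightarrow> N\<noteq>0 \<Longrightarrow>
         c/(X*A*(Y*B)*(F*N))*(N*M) = c/(X*Y*F)*(M/(A*B))" by (simp add: field_simps)
      have "pi/2 * (Z * (real n + 1/2)) / (X * A * (Y * B) * (F * (real n + 1))) * ((real n + 1) * (2*a + real n + 1))
         = pi/2 * (Z * (real n + 1/2)) / (X * Y * F) * ((2*a + real n + 1) / (A * B))"
        by (rule g) (use AB X Y n1 in auto)
      also have "\<dots> = pi/2 * Z / (X * Y * F) * ((real n + 1/2) * (2*a + real n + 1) / (A * B))"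
        by (simp add: field_simps)
      finally show ?thesis .
    qed
    have r: "pi/2 * Z / (X * Y * F) - pi/2 * Z / (X * A / a * (Y * B / (a + 1/2)) * F)
       = pi/2 * Z / (X * Y * F) * (1 - a * (a + 1/2) / (A * B))"
      using AB X Y Z a by (simp add: field_simps)
    have m: "(real n + 1/2) * (2*a + real n + 1) / (A * B) = 1 - a * (a + 1/2) / (A * B)"
      unfolding key using AB by (simp add: field_simps)
    show ?thesis unfolding l r m ..
  qed
  then show ?thesis unfolding K0 K1 K2 A_def B_def F_def .
qed

lemma J_int:
  fixes a :: real assumes "a > 0"
  shows "has_bochner_integral lborel (\<lambda>t. indicator {0..} t * Pk a (Suc n) t) (Kc a n)"
  using assms
proof (induction n arbitrary: a)
  case 0
  have "Kc a 0 = pi / (2*a)" unfolding Kc_def by simp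
  moreover have "\<And>t. Pk a (Suc 0) t = 1 / (t^2 + a^2)" unfolding Pk_def by simp
  ultimately show ?case using base_int[OF 0] by simp
next
  case (Suc n)
  define c where "c = (real n + 1) * (2*a + real n + 1)"
  have c: "c \<noteq> 0" unfolding c_def using Suc.prems by auto
  have h: "has_bochner_integral lborel (\<lambda>t. (indicator {0..} t * Pk a (Suc n) t - indicator {0..} t * Pk (a+1) (Suc n) t) / c)
       ((Kc a n - Kc (a+1) n) / c)"
    using Suc.IH[of a] Suc.IH[of "a+1"] Suc.prems by (intro has_bochner_integral_divide_zero has_bochner_integral_diff) auto
  have e1: "(\<lambda>t. (indicator {0..} t * Pk a (Suc n) t - indicator {0..} t * Pk (a+1) (Suc n) t) / c)
     = (\<lambda>t. indicator {0..} t * Pk a (Suc (Suc n)) t)"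
  proof
    fix t
    have "Pk a (Suc (Suc n)) t * c = Pk a (Suc n) t - Pk (a+1) (Suc n) t"
      unfolding c_def by (rule Pk_rec) (use Suc.prems in auto)
    then show "(indicator {0..} t * Pk a (Suc n) t - indicator {0..} t * Pk (a+1) (Suc n) t) / c
      = indicator {0..} t * Pk a (Suc (Suc n)) t"
      using c by (cases "t \<ge> 0") (auto simp: field_simps)
  qed
  have e2: "(Kc a n - Kc (a+1) n) / c = Kc a (Suc n)"
    using Kc_rec[OF Suc.prems, of n] c unfolding c_def by (simp add: field_simps)
  show ?case using h unfolding e1 e2 .
qed

lemma gen_div: fixes x y z w :: real shows "x*y = z/w \<Longrightarrow> y \<noteq> 0 \<Longrightarrow> w \<noteq> 0 \<Longrightarrow> x = z/(w*y)"
  by (simp add: field_simps)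

lemma gen_simp1: fixes F ea eh Ga Gh Gb c d :: real
  assumes "F > 0" "ea > 0" "eh > 0" "Ga > 0" "Gh > 0" "Gb > 0" "c > 0" "d > 0"
  shows "pi/2*(F*ea/Ga)*(F*eh/(Gh*d))/((F*(ea*eh)/(Gb*c))*F) = pi/2*Gb/(Ga*Gh)*(c/d)"
  using assms by (simp add: field_simps)

lemma gen2: fixes u p q :: real shows "u > 0 \<Longrightarrow> q \<noteq> 0 \<Longrightarrow> (u*u)/2*p/(q*u) * 1 = 1/2*u*p/q"
  by (simp add: field_simps)

lemma Gamma_series_pos: "(x::real) > 0 \<Longrightarrow> Gamma_series x n > 0"
  unfolding Gamma_series_def by (intro divide_pos_pos mult_pos_pos pochhammer_pos) auto

lemma lim_main:
  fixes a :: real assumes a: "a > 0"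
  shows "(\<lambda>n. (pochhammer a (Suc n))^2 * Kc a n) \<longlonglongrightarrow> 1/2 * sqrt pi * Gamma (a + 1/2) / Gamma a"
proof -
  define b where "b = a + 1/2"
  have b: "b > 0" unfolding b_def using a by simp
  define G where "G = (Gamma_series :: real \<Rightarrow> nat \<Rightarrow> real)"
  have Gp: "\<And>x n. x > 0 \<Longrightarrow> G x n > 0" unfolding G_def by (rule Gamma_series_pos)
  have Gdef: "\<And>x n. G x n = fact n * exp (x * ln (real n)) / pochhammer x (Suc n)"
    unfolding G_def Gamma_series_def by simp
  have eq: "(pochhammer a (Suc n))^2 * Kc a n = pi/2 * G b n / (G a n * G (1/2) n) * ((b + real n)/(real n + 1/2))" for n
  proof -
    have pa: "pochhammer a (Suc n) = fact n * exp (a * ln (real n)) / G a n"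
      using Gp[OF a, of n] pochhammer_pos[OF a, of "Suc n"] unfolding Gdef by (simp add: field_simps)
    have ph: "pochhammer (1/2) n = fact n * exp (1/2 * ln (real n)) / (G (1/2) n * (real n + 1/2))"
    proof -
      have "pochhammer (1/2::real) (Suc n) = fact n * exp (1/2 * ln (real n)) / G (1/2) n"
        using Gp[of "1/2" n] pochhammer_pos[of "1/2::real" "Suc n"] unfolding Gdef by (simp add: field_simps)
      then show ?thesis using Gp[of "1/2" n] by (intro gen_div) (auto simp: pochhammer_Suc add_ac)
    qed
    have pb: "pochhammer b n = fact n * exp (b * ln (real n)) / (G b n * (b + real n))"
    proof -
      have "pochhammer b (Suc n) = fact n * exp (b * ln (real n)) / G b n"
        using Gp[OF b, of n] pochhammer_pos[OF b, of "Suc n"] unfolding Gdef by (simp add: field_simps)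
      then show ?thesis using Gp[OF b, of n] b by (intro gen_div) (auto simp: pochhammer_Suc add_ac)
    qed
    have ex: "exp (b * ln (real n)) = exp (a * ln (real n)) * exp (1/2 * ln (real n))"
      unfolding b_def by (simp add: distrib_right exp_add)
    have pos: "G a n > 0" "G b n > 0" "G (1/2) n > 0" "fact n > (0::real)" "b + real n > 0" "real n + 1/2 > 0"
      "exp (a * ln (real n)) > 0" "exp (1/2 * ln (real n)) > 0"
      using Gp a b by auto
    have "(pochhammer a (Suc n))^2 * Kc a n = pi/2 * pochhammer a (Suc n) * pochhammer (1/2) n / (pochhammer b n * fact n)"
      unfolding Kc_def b_def using pochhammer_pos[OF a, of "Suc n"] by (simp add: power2_eq_square field_simps)
    also have "\<dots> = pi/2 * G b n / (G a n * G (1/2) n) * ((b + real n)/(real n + 1/2))"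
      unfolding pa ph pb ex using pos by (intro gen_simp1) auto
    finally show ?thesis .
  qed
  have l1: "(\<lambda>n. pi/2 * G b n / (G a n * G (1/2) n)) \<longlonglongrightarrow> pi/2 * Gamma b / (Gamma a * Gamma (1/2))"
    unfolding G_def using a b
    by (intro tendsto_intros) (auto simp: Gamma_eq_zero_iff nonpos_Ints_def Gamma_one_half_real)
  have l2: "(\<lambda>n. (b + real n)/(real n + 1/2)) \<longlonglongrightarrow> 1"
  proof -
    have "(\<lambda>n. (1 + b * inverse (real n)) / (1 + 1/2 * inverse (real n))) \<longlonglongrightarrow> (1 + b * 0) / (1 + 1/2 * 0)"
      by (intro tendsto_intros lim_inverse_n) auto
    then have "(\<lambda>n. (1 + b * inverse (real n)) / (1 + 1/2 * inverse (real n))) \<longlonglongrightarrow> 1" by simp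
    moreover have "eventually (\<lambda>n. (1 + b * inverse (real n)) / (1 + 1/2 * inverse (real n)) = (b + real n)/(real n + 1/2)) sequentially"
      using eventually_gt_at_top[of "0::nat"]
    proof eventually_elim
      case (elim n)
      then have "1 + b * inverse (real n) = (b + real n) / real n" "1 + 1/2 * inverse (real n) = (real n + 1/2) / real n"
        by (simp_all add: field_simps)
      then show ?case using elim by simp
    qed
    ultimately show ?thesis by (rule Lim_transform_eventually)
  qed
  have "(\<lambda>n. pi/2 * G b n / (G a n * G (1/2) n) * ((b + real n)/(real n + 1/2))) \<longlonglongrightarrow> pi/2 * Gamma b / (Gamma a * Gamma (1/2)) * 1"
    by (intro tendsto_mult l1 l2)
  moreover have "pi/2 * Gamma b / (Gamma a * Gamma (1/2)) * 1 = 1/2 * sqrt pi * Gamma (a + 1/2) / Gamma a"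
  proof -
    have "pi = sqrt pi * sqrt pi" by simp
    moreover have "Gamma a \<noteq> 0" using a by (auto simp: Gamma_eq_zero_iff nonpos_Ints_def)
    ultimately show ?thesis unfolding b_def Gamma_one_half_real
      by (metis gen2 real_sqrt_gt_0_iff pi_gt_zero)
  qed
  ultimately show ?thesis unfolding eq by simp
qed



lemma psf: "product_sigma_finite (\<lambda>_::nat. restrict_space lborel {0..(R::real)})"
  unfolding product_sigma_finite_def
  by (auto intro!: sigma_finite_measure_restrict_space lborel.sigma_finite_measure_axioms)

lemma int1:
  fixes z :: complex assumes z: "z \<noteq> 0" and R: "R \<ge> 0"
  shows "integral\<^sup>L (restrict_space lborel {0..R}) (\<lambda>y. exp (of_real y * z)) = (exp (of_real R * z) - 1) / z"
proof -
  have "integral\<^sup>L (restrict_space lborel {0..R}) (\<lambda>y. exp (of_real y * z))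
      = (LBINT y : {0..R}. exp (of_real y * z))"
    by (subst integral_restrict_space) (auto simp: set_lebesgue_integral_def)
  also have "\<dots> = (LBINT y = ereal 0..ereal R. exp (of_real y * z))"
    using R by (intro interval_integral_Icc[symmetric])
  also have "\<dots> = exp (of_real R * z) / z - exp (of_real 0 * z) / z"
  proof (intro interval_integral_FTC_finite)
    show "continuous_on {min 0 R..max 0 R} (\<lambda>y. exp (complex_of_real y * z))"
      by (intro continuous_intros)
    fix x assume "min 0 R \<le> x" "x \<le> max 0 R"
    have "((\<lambda>w. exp (w * z) / z) has_field_derivative exp (of_real x * z)) (at (of_real x))"
      using z by (auto intro!: derivative_eq_intros)
    then show "((\<lambda>y. exp (complex_of_real y * z) / z) has_vector_derivative exp (complex_of_real x * z))
        (at x within {min 0 R..max 0 R})"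
      by (rule has_vector_derivative_real_field)
  qed
  finally show ?thesis by (simp add: diff_divide_distrib)
qed

lemma fin_cube: "finite_measure (cube k R)"
proof -
  interpret product_sigma_finite "\<lambda>_::nat. restrict_space lborel {0..R}" by (rule psf)
  show ?thesis unfolding cube_def
  proof (rule finite_measureI)
    have "emeasure (Pi\<^sub>M {..<2*k} (\<lambda>_. restrict_space lborel {0..R})) (space (Pi\<^sub>M {..<2*k} (\<lambda>_. restrict_space lborel {0..R})))
      = (\<Prod>i<2*k. emeasure (restrict_space lborel {0..R}) (space (restrict_space lborel {0..R})))"
      unfolding space_PiM by (intro emeasure_PiM sets.top) auto
    also have "\<dots> = (\<Prod>i<2*k. emeasure lborel {0..R})"
      by (simp add: emeasure_restrict_space space_restrict_space)
    finally show "emeasure (Pi\<^sub>M {..<2*k} (\<lambda>_. restrict_space lborel {0..R})) (space (Pi\<^sub>M {..<2*k} (\<lambda>_. restrict_space lborel {0..R}))) \<noteq> \<infinity>"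
      by (simp add: emeasure_lborel_Icc_eq ennreal_power power_eq_top_ennreal)
  qed
qed

lemma meas_num: "num_arg k \<in> borel_measurable (cube k R)"
  unfolding num_arg_def cube_def
  by (intro borel_measurable_sum borel_measurable_times borel_measurable_const
      measurable_compose[OF measurable_component_singleton]) (auto simp: measurable_restrict_space1)

lemma meas_den: "denom a k \<in> borel_measurable (cube k R)"
  unfolding denom_def cube_def
  by (intro borel_measurable_add borel_measurable_sum borel_measurable_divide borel_measurable_const
      measurable_compose[OF measurable_component_singleton]) (auto simp: measurable_restrict_space1)

definition cc :: "real \<Rightarrow> nat \<Rightarrow> real" where "cc a i = a + real (i div 2)"
definition zz :: "real \<Rightarrow> real \<Rightarrow> nat \<Rightarrow> complex" where
  "zz a t i = \<i> * (-1)^i - of_real (t / cc a i)"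
definition EE :: "real \<Rightarrow> nat \<Rightarrow> real \<Rightarrow> (nat \<Rightarrow> real) \<Rightarrow> complex" where
  "EE a k t x = exp (\<i> * of_real (num_arg k x)) * of_real (exp (- t * denom a k x))"

lemma denom_sum: "denom a k x = (\<Sum>i<2*k. x i / cc a i)"
proof (induction k)
  case 0 then show ?case by (simp add: denom_def)
next
  case (Suc k)
  have e: "2 * Suc k = Suc (Suc (2*k))" by simp
  have "denom a (Suc k) x = denom a k x + x (2*k+1) / (a + real k) + x (2*k) / (a + real k)"
    unfolding denom_def by simp
  also have "\<dots> = (\<Sum>i<2*Suc k. x i / cc a i)"
    unfolding e sum.lessThan_Suc Suc.IH by (simp add: cc_def)
  finally show ?case .
qed

lemma zz_nonzero: "zz a t i \<noteq> 0"
proof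
  assume "zz a t i = 0"
  then have "Im (zz a t i) = 0" by simp
  moreover have "Im (zz a t i) = (-1)^i" unfolding zz_def by simp
  ultimately show False by simp
qed

lemma sum_zz: "(\<Sum>i<2*k. of_real (x i) * zz a t i) = \<i> * of_real (num_arg k x) - of_real (t * denom a k x)"
  unfolding zz_def num_arg_def denom_sum
  by (simp add: algebra_simps sum_subtractf sum_distrib_left sum_divide_distrib)

lemma EE_prod: "EE a k t x = (\<Prod>i<2*k. exp (of_real (x i) * zz a t i))"
proof -
  have "(\<Prod>i<2*k. exp (of_real (x i) * zz a t i)) = exp (\<Sum>i<2*k. of_real (x i) * zz a t i)"
    by (simp add: exp_sum)
  also have "\<dots> = exp (\<i> * of_real (num_arg k x)) * exp (- of_real (t * denom a k x))"
    unfolding sum_zz by (simp add: exp_diff exp_minus field_simps)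
  also have "\<dots> = EE a k t x" unfolding EE_def by (simp flip: exp_of_real)
  finally show ?thesis ..
qed

lemma int_EE:
  assumes R: "R \<ge> 0"
  shows "integral\<^sup>L (cube k R) (EE a k t) = (\<Prod>i<2*k. (exp (of_real R * zz a t i) - 1) / zz a t i)"
proof -
  interpret product_sigma_finite "\<lambda>_::nat. restrict_space lborel {0..R}" by (rule psf)
  have "integral\<^sup>L (cube k R) (EE a k t) = (\<integral>x. (\<Prod>i<2*k. exp (of_real (x i) * zz a t i)) \<partial>cube k R)"
    unfolding EE_prod ..
  also have "\<dots> = (\<Prod>i<2*k. integral\<^sup>L (restrict_space lborel {0..R}) (\<lambda>y. exp (of_real y * zz a t i)))"
    unfolding cube_def
  proof (rule product_integral_prod)
    fix i :: nat
    have "integrable lborel (\<lambda>y. indicator {0..R} y *\<^sub>R exp (of_real y * zz a t i))"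
      by (intro borel_integrable_compact continuous_intros) auto
    then show "integrable (restrict_space lborel {0..R}) (\<lambda>y. exp (of_real y * zz a t i))"
      by (subst integrable_restrict_space) auto
  qed simp
  also have "\<dots> = (\<Prod>i<2*k. (exp (of_real R * zz a t i) - 1) / zz a t i)"
    using R zz_nonzero by (simp add: int1 mult.commute)
  finally show ?thesis .
qed

lemma prod_pairs: "(\<Prod>i<2*(k::nat). (f i :: 'a::comm_monoid_mult)) = (\<Prod>m<k. f (2*m) * f (2*m+1))"
proof (induction k)
  case (Suc k)
  have e: "2 * Suc k = Suc (Suc (2*k))" by simp
  show ?case unfolding e prod.lessThan_Suc Suc.IH by (simp add: mult.assoc)
qed simp

definition WW :: "real \<Rightarrow> real \<Rightarrow> real \<Rightarrow> nat \<Rightarrow> complex" where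
  "WW a t R m = (exp (of_real R * (\<i> - of_real (t / (a + real m)))) - 1) / (\<i> - of_real (t / (a + real m)))"

definition Phi :: "real \<Rightarrow> nat \<Rightarrow> real \<Rightarrow> real \<Rightarrow> real" where
  "Phi a k t R = (\<Prod>m<k. (cmod (WW a t R m))^2)"

lemma int_EE2:
  assumes R: "R \<ge> 0"
  shows "integral\<^sup>L (cube k R) (EE a k t) = of_real (Phi a k t R)"
proof -
  have z0: "zz a t (2*m) = \<i> - of_real (t / (a + real m))" for m
    unfolding zz_def cc_def by simp
  have z1: "zz a t (2*m+1) = cnj (\<i> - of_real (t / (a + real m)))" for m
    unfolding zz_def cc_def by (simp add: complex_eq_iff)
  have p: "(exp (of_real R * zz a t (2*m)) - 1) / zz a t (2*m) * ((exp (of_real R * zz a t (2*m+1)) - 1) / zz a t (2*m+1))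
      = of_real ((cmod (WW a t R m))^2)" for m
    unfolding complex_norm_square z0 z1 WW_def by (simp add: exp_cnj)
  show ?thesis unfolding int_EE[OF R] prod_pairs Phi_def p by simp
qed

lemma space_cube: "space (cube k R) = PiE {..<2*k} (\<lambda>_. {0..R})"
  unfolding cube_def space_PiM by (simp add: space_restrict_space)

lemma denom_nonneg: "a > 0 \<Longrightarrow> x \<in> space (cube k R) \<Longrightarrow> denom a k x \<ge> 0"
  unfolding space_cube denom_sum cc_def by (intro sum_nonneg divide_nonneg_pos) (auto simp: PiE_iff)

lemma meas_EE_pair: "(\<lambda>p. EE a k (snd p) (fst p)) \<in> borel_measurable (cube k R \<Otimes>\<^sub>M restrict_space lborel {0..T})"
proof -
  have [measurable]: "num_arg k \<in> borel_measurable (cube k R)" "denom a k \<in> borel_measurable (cube k R)"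
    by (rule meas_num meas_den)+
  have [measurable]: "(\<lambda>p. snd p) \<in> borel_measurable (cube k R \<Otimes>\<^sub>M restrict_space lborel {0..T})"
    by (rule measurable_compose[OF measurable_snd]) (intro measurable_restrict_space1, simp)
  have [measurable]: "(\<lambda>p. denom a k (fst p)) \<in> borel_measurable (cube k R \<Otimes>\<^sub>M restrict_space lborel {0..T})"
    "(\<lambda>p. num_arg k (fst p)) \<in> borel_measurable (cube k R \<Otimes>\<^sub>M restrict_space lborel {0..T})"
    by (rule measurable_compose[OF measurable_fst], simp)+
  show ?thesis unfolding EE_def by measurable
qed

lemma AE_den_pos:
  assumes k: "k \<ge> 1" and a: "a > 0" and R: "R \<ge> 0"
  shows "AE x in cube k R. denom a k x > 0"
proof -
  interpret product_sigma_finite "\<lambda>_::nat. restrict_space lborel {0..R}" by (rule psf)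
  define E where "E = (\<lambda>i::nat. if i = 0 then {0} else {0..R})"
  define N where "N = PiE {..<2*k} E"
  have Es: "E i \<in> sets (restrict_space lborel {0..R})" for i
    unfolding E_def using R by (auto simp: sets_restrict_space_iff)
  have Nsets: "N \<in> sets (cube k R)" unfolding N_def cube_def
    by (rule sets_PiM_I_finite) (auto intro: Es)
  have "emeasure (cube k R) N = (\<Prod>i<2*k. emeasure (restrict_space lborel {0..R}) (E i))"
    unfolding N_def cube_def by (rule emeasure_PiM) (auto intro: Es)
  also have "\<dots> = 0"
  proof (rule prod_zero)
    show "\<exists>i\<in>{..<2*k}. emeasure (restrict_space lborel {0..R}) (E i) = 0"
      using k R by (intro bexI[of _ 0]) (auto simp: E_def emeasure_restrict_space)
  qed simp
  finally have Nnull: "N \<in> null_sets (cube k R)" using Nsets by auto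
  show ?thesis
  proof (rule AE_I'[OF Nnull])
    show "{x \<in> space (cube k R). \<not> 0 < denom a k x} \<subseteq> N"
    proof safe
      fix x assume x: "x \<in> space (cube k R)" and nd: "\<not> 0 < denom a k x"
      have xs: "\<And>i. i < 2*k \<Longrightarrow> 0 \<le> x i \<and> x i \<le> R" "\<And>i. i \<ge> 2*k \<Longrightarrow> x i = undefined"
        using x unfolding space_cube by (auto simp: PiE_iff extensional_def)
      have "x 0 / cc a 0 \<le> denom a k x"
        unfolding denom_sum using k a xs
        by (intro member_le_sum divide_nonneg_pos) (auto simp: cc_def)
      then have "x 0 / cc a 0 \<le> 0" using nd by simp
      moreover have "x 0 \<ge> 0" "cc a 0 > 0" using xs(1)[of 0] k a by (auto simp: cc_def)
      ultimately have "x 0 = 0" by (simp add: divide_le_0_iff)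
      then show "x \<in> N" unfolding N_def E_def using x unfolding space_cube by (auto simp: PiE_iff)
    qed
  qed
qed

lemma fin_T: "finite_measure (restrict_space lborel {0..(T::real)})"
  by (intro finite_measureI) (simp add: emeasure_restrict_space space_restrict_space emeasure_lborel_Icc_eq)

lemma intexp:
  fixes D T :: real assumes D: "D > 0" and T: "T \<ge> 0"
  shows "integral\<^sup>L (restrict_space lborel {0..T}) (\<lambda>t. exp (- t * D)) = (1 - exp (- T * D)) / D"
proof -
  have "integral\<^sup>L (restrict_space lborel {0..T}) (\<lambda>t. exp (- t * D)) = (LBINT t : {0..T}. exp (- t * D))"
    by (subst integral_restrict_space) (auto simp: set_lebesgue_integral_def)
  also have "\<dots> = (LBINT t = ereal 0..ereal T. exp (- t * D))"
    using T by (intro interval_integral_Icc[symmetric])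
  also have "\<dots> = (- exp (- T * D) / D) - (- exp (- 0 * D) / D)"
  proof (intro interval_integral_FTC_finite)
    show "continuous_on {min 0 T..max 0 T} (\<lambda>t. exp (- t * D))"
      by (intro continuous_intros)
    fix x assume "min 0 T \<le> x" "x \<le> max 0 T"
    have "((\<lambda>t. - exp (- t * D) / D) has_real_derivative exp (- x * D)) (at x)"
      using D by (auto intro!: derivative_eq_intros)
    then show "((\<lambda>t. - exp (- t * D) / D) has_vector_derivative exp (- x * D)) (at x within {min 0 T..max 0 T})"
      by (simp add: has_real_derivative_iff_has_vector_derivative has_vector_derivative_at_within)
  qed
  finally show ?thesis by (simp add: diff_divide_distrib)
qed

definition psi :: "real \<Rightarrow> real \<Rightarrow> real" where "psi T D = (1 - exp (- T * D)) / D"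

lemma fubini_step:
  assumes k: "k \<ge> 1" and a: "a > 0" and R: "R \<ge> 0" and T: "T \<ge> 0"
  shows "integral\<^sup>L (cube k R) (\<lambda>x. exp (\<i> * of_real (num_arg k x)) * of_real (psi T (denom a k x)))
       = of_real (integral\<^sup>L (restrict_space lborel {0..T}) (\<lambda>t. Phi a k t R))"
proof -
  interpret M1: finite_measure "cube k R" by (rule fin_cube)
  interpret M2: finite_measure "restrict_space lborel {0..T}" by (rule fin_T)
  interpret P: pair_sigma_finite "cube k R" "restrict_space lborel {0..T}" by standard
  interpret PP: finite_measure "cube k R \<Otimes>\<^sub>M restrict_space lborel {0..T}"
    by (rule finite_measure_pair_measure[OF fin_T fin_cube])
  have meas: "case_prod (\<lambda>x t. EE a k t x) \<in> borel_measurable (cube k R \<Otimes>\<^sub>M restrict_space lborel {0..T})"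
      using meas_EE_pair[of a k R T] by (simp add: case_prod_beta')
  have int: "integrable (cube k R \<Otimes>\<^sub>M restrict_space lborel {0..T}) (case_prod (\<lambda>x t. EE a k t x))"
  proof (rule PP.integrable_const_bound[where B=1])
    show "AE p in cube k R \<Otimes>\<^sub>M restrict_space lborel {0..T}. norm (case_prod (\<lambda>x t. EE a k t x) p) \<le> 1"
    proof (rule AE_I2)
      fix p assume p: "p \<in> space (cube k R \<Otimes>\<^sub>M restrict_space lborel {0..T})"
      obtain x t where pxt: "p = (x, t)" by (cases p)
      from p have x: "x \<in> space (cube k R)" and t: "t \<ge> 0"
        unfolding pxt by (auto simp: space_pair_measure space_restrict_space)
      have "denom a k x \<ge> 0" using denom_nonneg[OF a x] .
      then have "exp (- t * denom a k x) \<le> 1" using t by (simp add: mult_nonneg_nonneg)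
      then show "norm (case_prod (\<lambda>x t. EE a k t x) p) \<le> 1"
        unfolding EE_def pxt by (simp add: norm_mult norm_exp_i_times)
    qed
  qed (rule meas)
  have "of_real (integral\<^sup>L (restrict_space lborel {0..T}) (\<lambda>t. Phi a k t R))
      = integral\<^sup>L (restrict_space lborel {0..T}) (\<lambda>t. integral\<^sup>L (cube k R) (EE a k t))"
    using R by (simp add: int_EE2)
  also have "\<dots> = integral\<^sup>L (cube k R) (\<lambda>x. integral\<^sup>L (restrict_space lborel {0..T}) (\<lambda>t. EE a k t x))"
    using P.Fubini_integral[OF int] by simp
  also have "\<dots> = integral\<^sup>L (cube k R) (\<lambda>x. exp (\<i> * of_real (num_arg k x)) * of_real (psi T (denom a k x)))"
  proof (rule integral_cong_AE)
    show "AE x in cube k R. integral\<^sup>L (restrict_space lborel {0..T}) (\<lambda>t. EE a k t x)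
        = exp (\<i> * of_real (num_arg k x)) * of_real (psi T (denom a k x))"
      using AE_den_pos[OF k a R]
    proof eventually_elim
      case (elim x)
      show ?case unfolding EE_def psi_def using intexp[OF elim T] by simp
    qed
    show "(\<lambda>x. integral\<^sup>L (restrict_space lborel {0..T}) (\<lambda>t. EE a k t x)) \<in> borel_measurable (cube k R)"
      using meas by (rule M2.borel_measurable_lebesgue_integral)
    show "(\<lambda>x. exp (\<i> * of_real (num_arg k x)) * of_real (psi T (denom a k x))) \<in> borel_measurable (cube k R)"
      using meas_num meas_den unfolding psi_def by measurable
  qed
  finally show ?thesis ..
qed

lemma cmod_i_minus: "(cmod (\<i> - of_real s))^2 = 1 + s^2"
  by (simp add: cmod_power2)

lemma WW_bound:
  assumes a: "a > 0" and t: "t \<ge> 0" and R: "R \<ge> 0"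
  shows "(cmod (WW a t R m))^2 \<le> 4 / (1 + (t / (a + real m))^2)"
proof -
  define s where "s = t / (a + real m)"
  have s: "s \<ge> 0" unfolding s_def using a t by simp
  have e: "cmod (exp (of_real R * (\<i> - of_real s))) = exp (- R * s)"
    by (simp add: norm_exp)
  have ee: "exp (- R * s) \<le> 1" using R s by (simp add: mult_nonneg_nonneg)
  have ce: "cmod (exp (of_real R * (\<i> - of_real s))) \<le> 1" using e ee by (simp only:)
  have n: "cmod (exp (of_real R * (\<i> - of_real s)) - 1) \<le> 2"
  proof -
    have tri: "cmod (exp (of_real R * (\<i> - of_real s)) - 1) \<le> cmod (exp (of_real R * (\<i> - of_real s))) + 1"
      using norm_triangle_ineq4[of "exp (of_real R * (\<i> - of_real s))" 1] by (simp only: norm_one)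
    show ?thesis using tri ce by linarith
  qed
  have "(cmod (WW a t R m))^2 = (cmod (exp (of_real R * (\<i> - of_real s)) - 1))^2 / (1 + s^2)"
    unfolding WW_def s_def[symmetric] by (simp add: norm_divide power_divide cmod_i_minus)
  also have "\<dots> \<le> 2^2 / (1 + s^2)"
    using n by (intro divide_right_mono power_mono) (auto simp: add_nonneg_nonneg)
  finally show ?thesis unfolding s_def by simp
qed

lemma Phi_nonneg: "Phi a k t R \<ge> 0"
  unfolding Phi_def by (intro prod_nonneg) auto

lemma Phi_bound:
  assumes a: "a > 0" and t: "t \<ge> 0" and R: "R \<ge> 0" and k: "k \<ge> 1"
  shows "Phi a k t R \<le> 4^k * (a^2 / (t^2 + a^2))"
proof -
  obtain k' where k': "k = Suc k'" using k by (cases k) auto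
  have f0: "(cmod (WW a t R 0))^2 \<le> 4 * (a^2 / (t^2 + a^2))"
  proof -
    have "4 / (1 + (t / (a + real 0))^2) = 4 * (a^2 / (t^2 + a^2))"
      using a by (simp add: field_simps power2_eq_square)
    then show ?thesis using WW_bound[OF a t R, of 0] by simp
  qed
  have fm: "(cmod (WW a t R (Suc m)))^2 \<le> 4" for m
  proof -
    have g: "\<And>y::real. 1 \<le> y \<Longrightarrow> 4 / y \<le> 4" by (simp add: divide_le_eq)
    have "4 / (1 + (t / (a + real (Suc m)))^2) \<le> 4" by (rule g) simp
    then show ?thesis using WW_bound[OF a t R, of "Suc m"] by linarith
  qed
  have "Phi a k t R = (cmod (WW a t R 0))^2 * (\<Prod>m<k'. (cmod (WW a t R (Suc m)))^2)"
    unfolding Phi_def k' prod.lessThan_Suc_shift by simp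
  also have "\<dots> \<le> (4 * (a^2 / (t^2 + a^2))) * (\<Prod>m<k'. 4)"
    by (intro mult_mono f0 prod_mono) (auto simp: fm intro: prod_nonneg)
  also have "\<dots> = 4^k * (a^2 / (t^2 + a^2))" unfolding k' by simp
  finally show ?thesis .
qed

lemma WW_lim:
  assumes a: "a > 0" and t: "t > 0"
  shows "((\<lambda>R. (cmod (WW a t R m))^2) \<longlongrightarrow> 1 / (1 + (t / (a + real m))^2)) at_top"
proof -
  define s where "s = t / (a + real m)"
  have s: "s > 0" unfolding s_def using a t by simp
  define z where "z = \<i> - complex_of_real s"
  have z: "z \<noteq> 0" unfolding z_def by (simp add: complex_eq_iff)
  have l1: "LIM R at_top. - (s * R) :> at_bot"
    by (rule filterlim_compose[OF filterlim_uminus_at_bot_at_top filterlim_tendsto_pos_mult_at_top[OF tendsto_const s filterlim_ident]])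
  have "((\<lambda>R. exp (- (s * R))) \<longlongrightarrow> 0) at_top"
    by (rule filterlim_compose[OF exp_at_bot l1])
  moreover have "\<And>R. cmod (exp (of_real R * z)) = exp (- (s * R))"
    unfolding z_def by (simp add: norm_exp)
  ultimately have "((\<lambda>R. cmod (exp (of_real R * z))) \<longlongrightarrow> 0) at_top" by simp
  then have e0: "((\<lambda>R. exp (of_real R * z)) \<longlongrightarrow> 0) at_top"
    by (rule tendsto_norm_zero_cancel)
  have "((\<lambda>R. (cmod ((exp (of_real R * z) - 1) / z))^2) \<longlongrightarrow> (cmod ((0 - 1) / z))^2) at_top"
    using z by (intro tendsto_intros e0)
  moreover have "(cmod ((0 - 1) / z))^2 = 1 / (1 + s^2)"
    unfolding z_def by (simp add: norm_divide power_divide cmod_i_minus)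
  ultimately show ?thesis unfolding WW_def s_def[symmetric] z_def[symmetric] by simp
qed

lemma Phi_lim:
  assumes a: "a > 0" and t: "t > 0"
  shows "((\<lambda>R. Phi a k t R) \<longlongrightarrow> (\<Prod>m<k. 1 / (1 + (t / (a + real m))^2))) at_top"
  unfolding Phi_def by (intro tendsto_prod WW_lim a t)


lemma meas_Phi: "(\<lambda>t. Phi a k t R) \<in> borel_measurable borel"
  unfolding Phi_def WW_def by measurable

lemma bound_int:
  fixes a :: real assumes a: "a > 0"
  shows "integrable lborel (\<lambda>t. indicator {0..} t * (4^k * (a^2 / (t^2 + a^2))))"
proof -
  have "integrable lborel (\<lambda>t. (4^k * a^2) * (indicator {0..} t * (1 / (t^2 + a^2))))"
    using integrable.intros[OF base_int[OF a]] by (intro integrable_mult_right)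
  moreover have "(\<lambda>t. (4^k * a^2) * (indicator {0..} t * (1 / (t^2 + a^2)))) = (\<lambda>t. indicator {0..} t * (4^k * (a^2 / (t^2 + a^2))))"
    by (auto simp: fun_eq_iff split: split_indicator)
  ultimately show ?thesis by simp
qed

lemma T_lim:
  assumes a: "a > 0" and k: "k \<ge> 1" and R: "R \<ge> 0"
  shows "((\<lambda>T. integral\<^sup>L (restrict_space lborel {0..T}) (\<lambda>t. Phi a k t R))
     \<longlongrightarrow> integral\<^sup>L lborel (\<lambda>t. indicator {0..} t * Phi a k t R)) at_top"
proof -
  have eq: "integral\<^sup>L (restrict_space lborel {0..T}) (\<lambda>t. Phi a k t R) = integral\<^sup>L lborel (\<lambda>t. indicator {0..T} t * Phi a k t R)" for T
    by (subst integral_restrict_space) auto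
  have [measurable]: "(\<lambda>t. Phi a k t R) \<in> borel_measurable borel" by (rule meas_Phi)
  show ?thesis unfolding eq
  proof (rule integral_dominated_convergence_at_top[OF _ _ bound_int[OF a, of k]])
    show "AE t in lborel. ((\<lambda>T. indicator {0..T} t * Phi a k t R) \<longlongrightarrow> indicator {0..} t * Phi a k t R) at_top"
    proof (rule AE_I2)
      fix t :: real
      have "eventually (\<lambda>T. indicator {0..T} t * Phi a k t R = indicator {0..} t * Phi a k t R) at_top"
        using eventually_ge_at_top[of t] by eventually_elim (auto split: split_indicator)
      then show "((\<lambda>T. indicator {0..T} t * Phi a k t R) \<longlongrightarrow> indicator {0..} t * Phi a k t R) at_top"
        by (rule tendsto_eventually)
    qed
    show "\<forall>\<^sub>F T in at_top. AE t in lborel. norm (indicator {0..T} t * Phi a k t R) \<le> indicator {0..} t * (4^k * (a^2 / (t^2 + a^2)))"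
    proof (intro always_eventually allI AE_I2)
      fix T t :: real
      show "norm (indicator {0..T} t * Phi a k t R) \<le> indicator {0..} t * (4^k * (a^2 / (t^2 + a^2)))"
        using Phi_bound[OF a _ R k, of t] Phi_nonneg[of a k t R] by (auto split: split_indicator)
    qed
  qed auto
qed

lemma int_Phi: 
  assumes a: "a > 0" and k: "k \<ge> 1" and R: "R \<ge> 0"
  shows "integrable lborel (\<lambda>t. indicator {0..} t * Phi a k t R)"
proof (rule Bochner_Integration.integrable_bound[OF bound_int[OF a, of k]])
  show "(\<lambda>t. indicator {0..} t * Phi a k t R) \<in> borel_measurable lborel"
    using meas_Phi[of a k R] by simp
  show "AE t in lborel. norm (indicator {0..} t * Phi a k t R) \<le> norm (indicator {0..} t * (4^k * (a^2 / (t^2 + a^2))))"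
    using Phi_bound[OF a _ R k] Phi_nonneg[of a k _ R] by (intro AE_I2) (auto split: split_indicator)
qed

lemma R_lim:
  assumes a: "a > 0" and k: "k \<ge> 1"
  shows "((\<lambda>R. integral\<^sup>L lborel (\<lambda>t. indicator {0..} t * Phi a k t R))
     \<longlongrightarrow> integral\<^sup>L lborel (\<lambda>t. indicator {0..} t * (\<Prod>m<k. 1 / (1 + (t / (a + real m))^2)))) at_top"
proof (rule integral_dominated_convergence_at_top[OF _ _ bound_int[OF a, of k]])
  show "AE t in lborel. ((\<lambda>R. indicator {0..} t * Phi a k t R) \<longlongrightarrow> indicator {0..} t * (\<Prod>m<k. 1 / (1 + (t / (a + real m))^2))) at_top"
    using AE_lborel_singleton[of 0]
  proof eventually_elim
    case (elim t)
    show ?case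
    proof (cases "t > 0")
      case True
      then show ?thesis by (intro tendsto_mult tendsto_const Phi_lim a)
    next
      case False
      with elim have "t < 0" by simp
      then show ?thesis by simp
    qed
  qed
  show "\<forall>\<^sub>F R in at_top. AE t in lborel. norm (indicator {0..} t * Phi a k t R) \<le> indicator {0..} t * (4^k * (a^2 / (t^2 + a^2)))"
    using eventually_ge_at_top[of "0::real"]
  proof eventually_elim
    case (elim R)
    show ?case
      using Phi_bound[OF a _ elim k] Phi_nonneg[of a k _ R] by (intro AE_I2) (auto split: split_indicator)
  qed
  show "(\<lambda>t. indicator {0..} t * (\<Prod>m<k. 1 / (1 + (t / (a + real m))^2))) \<in> borel_measurable lborel"
    by measurable
  show "\<And>R. (\<lambda>t. indicator {0..} t * Phi a k t R) \<in> borel_measurable lborel"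
    using meas_Phi by simp
qed

lemma psi_lim: assumes D: "D > 0" shows "((\<lambda>T. psi T D) \<longlongrightarrow> 1 / D) at_top"
proof -
  have l1: "LIM T at_top. - (D * T) :> at_bot"
    by (rule filterlim_compose[OF filterlim_uminus_at_bot_at_top filterlim_tendsto_pos_mult_at_top[OF tendsto_const D filterlim_ident]])
  have "((\<lambda>T. exp (- (D * T))) \<longlongrightarrow> 0) at_top"
    by (rule filterlim_compose[OF exp_at_bot l1])
  then have "((\<lambda>T. (1 - exp (- (D * T))) / D) \<longlongrightarrow> (1 - 0) / D) at_top"
    using D by (intro tendsto_intros) auto
  then show ?thesis unfolding psi_def by (simp add: mult.commute)
qed

lemma psi_bound: assumes D: "D > 0" and T: "T \<ge> 0" shows "\<bar>psi T D\<bar> \<le> 1 / D"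
proof -
  have "exp (- T * D) \<le> 1" "exp (- T * D) > 0" using D T by (auto simp: mult_nonneg_nonneg)
  then show ?thesis unfolding psi_def using D by (auto simp: abs_if divide_le_eq field_simps)
qed

lemma A_lim:
  assumes k: "k \<ge> 1" and a: "a > 0" and R: "R \<ge> 0"
    and int: "integrable (cube k R) (\<lambda>x. exp (\<i> * of_real (num_arg k x)) * of_real (1 / denom a k x))"
  shows "((\<lambda>T. integral\<^sup>L (cube k R) (\<lambda>x. exp (\<i> * of_real (num_arg k x)) * of_real (psi T (denom a k x))))
     \<longlongrightarrow> integral\<^sup>L (cube k R) (\<lambda>x. exp (\<i> * of_real (num_arg k x)) * of_real (1 / denom a k x))) at_top"
proof (rule integral_dominated_convergence_at_top[OF _ _ integrable_norm[OF int]])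
  have [measurable]: "num_arg k \<in> borel_measurable (cube k R)" "denom a k \<in> borel_measurable (cube k R)"
    by (rule meas_num meas_den)+
  show "(\<lambda>x. exp (\<i> * of_real (num_arg k x)) * of_real (1 / denom a k x)) \<in> borel_measurable (cube k R)"
    by measurable
  show "\<And>T. (\<lambda>x. exp (\<i> * of_real (num_arg k x)) * of_real (psi T (denom a k x))) \<in> borel_measurable (cube k R)"
    unfolding psi_def by measurable
  show "AE x in cube k R. ((\<lambda>T. exp (\<i> * of_real (num_arg k x)) * of_real (psi T (denom a k x)))
      \<longlongrightarrow> exp (\<i> * of_real (num_arg k x)) * of_real (1 / denom a k x)) at_top"
    using AE_den_pos[OF k a R]
  proof eventually_elim
    case (elim x)
    show ?case by (intro tendsto_mult tendsto_const tendsto_of_real psi_lim elim)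
  qed
  show "\<forall>\<^sub>F T in at_top. AE x in cube k R. norm (exp (\<i> * of_real (num_arg k x)) * of_real (psi T (denom a k x)))
      \<le> norm (exp (\<i> * of_real (num_arg k x)) * of_real (1 / denom a k x))"
  proof (rule eventually_mono[OF eventually_ge_at_top[of "0::real"]])
    fix T :: real assume T: "0 \<le> T"
    show "AE x in cube k R. norm (exp (\<i> * of_real (num_arg k x)) * of_real (psi T (denom a k x)))
      \<le> norm (exp (\<i> * of_real (num_arg k x)) * of_real (1 / denom a k x))"
      using AE_den_pos[OF k a R]
    proof eventually_elim
      case (elim x)
      show ?case using psi_bound[OF elim T] elim
        by (simp add: norm_mult norm_divide norm_exp_i_times)
    qed
  qed
qed

lemma cube_eq:
  assumes k: "k \<ge> 1" and a: "a > 0" and R: "R \<ge> 0"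
    and int: "integrable (cube k R) (\<lambda>x. exp (\<i> * of_real (num_arg k x)) * of_real (1 / denom a k x))"
  shows "integral\<^sup>L (cube k R) (\<lambda>x. exp (\<i> * of_real (num_arg k x)) * of_real (1 / denom a k x))
     = of_real (integral\<^sup>L lborel (\<lambda>t. indicator {0..} t * Phi a k t R))"
proof (rule tendsto_unique[OF _ A_lim[OF k a R int]])
  show "((\<lambda>T. integral\<^sup>L (cube k R) (\<lambda>x. exp (\<i> * of_real (num_arg k x)) * of_real (psi T (denom a k x))))
     \<longlongrightarrow> of_real (integral\<^sup>L lborel (\<lambda>t. indicator {0..} t * Phi a k t R))) at_top"
  proof (rule Lim_transform_eventually)
    show "((\<lambda>T. complex_of_real (integral\<^sup>L (restrict_space lborel {0..T}) (\<lambda>t. Phi a k t R)))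
       \<longlongrightarrow> of_real (integral\<^sup>L lborel (\<lambda>t. indicator {0..} t * Phi a k t R))) at_top"
      by (intro tendsto_of_real T_lim a k R)
    show "\<forall>\<^sub>F T in at_top. complex_of_real (integral\<^sup>L (restrict_space lborel {0..T}) (\<lambda>t. Phi a k t R))
      = integral\<^sup>L (cube k R) (\<lambda>x. exp (\<i> * of_real (num_arg k x)) * of_real (psi T (denom a k x)))"
      using eventually_ge_at_top[of "0::real"] by eventually_elim (simp add: fubini_step[OF k a R])
  qed
qed simp


lemma prod_Pk:
  fixes a t :: real assumes a: "a > 0"
  shows "(\<Prod>m<k. 1 / (1 + (t / (a + real m))^2)) = (pochhammer a k)^2 * Pk a k t"
proof -
  have "(\<Prod>m<k. 1 / (1 + (t / (a + real m))^2)) = (\<Prod>m<k. (a + real m)^2 * (1 / (t^2 + (a + real m)^2)))"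
  proof (rule prod.cong)
    fix m assume "m \<in> {..<k}"
    have p: "a + real m > 0" using a by simp
    have q: "t^2 + (a + real m)^2 > 0" using p by (simp add: add_nonneg_pos)
    have "1 + (t / (a + real m))^2 = (t^2 + (a + real m)^2) / (a + real m)^2"
      using p by (simp add: field_simps power_divide)
    then show "1 / (1 + (t / (a + real m))^2) = (a + real m)^2 * (1 / (t^2 + (a + real m)^2))"
      using p q by simp
  qed simp
  also have "\<dots> = (\<Prod>m<k. (a + real m))^2 * Pk a k t"
    unfolding Pk_def prod.distrib power2_eq_square by simp
  also have "(\<Prod>m<k. (a + real m)) = pochhammer a k"
    by (simp add: pochhammer_prod lessThan_atLeast0)
  finally show ?thesis .
qed

lemma Ival:
  fixes a :: real assumes a: "a > 0"
  shows "integral\<^sup>L lborel (\<lambda>t. indicator {0..} t * (\<Prod>m<Suc n. 1 / (1 + (t / (a + real m))^2)))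
       = (pochhammer a (Suc n))^2 * Kc a n"
proof -
  have "has_bochner_integral lborel (\<lambda>t. (pochhammer a (Suc n))^2 * (indicator {0..} t * Pk a (Suc n) t)) ((pochhammer a (Suc n))^2 * Kc a n)"
    by (intro has_bochner_integral_mult_right J_int a)
  moreover have "(\<lambda>t. (pochhammer a (Suc n))^2 * (indicator {0..} t * Pk a (Suc n) t))
      = (\<lambda>t. indicator {0..} t * (\<Prod>m<Suc n. 1 / (1 + (t / (a + real m))^2)))"
    by (auto simp: prod_Pk[OF a] fun_eq_iff)
  ultimately show ?thesis by (simp add: has_bochner_integral_integral_eq)
qed

lemma Qc_Re: "Re (exp (\<i> * of_real (num_arg k x)) * of_real (1 / denom a k x)) = cos_integrand a k x"
  unfolding cos_integrand_def by (simp add: cis_conv_exp[symmetric])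

lemma Qc_Im: "Im (exp (\<i> * of_real (num_arg k x)) * of_real (1 / denom a k x)) = sin_integrand a k x"
  unfolding sin_integrand_def by (simp add: cis_conv_exp[symmetric])

lemma Qc_int:
  assumes "integrable M (cos_integrand a k)" "integrable M (sin_integrand a k)"
  shows "integrable M (\<lambda>x. exp (\<i> * of_real (num_arg k x)) * of_real (1 / denom a k x))"
proof -
  have A: "integrable M (\<lambda>x. of_real (cos_integrand a k x) + \<i> * of_real (sin_integrand a k x))"
  proof (rule Bochner_Integration.integrable_add)
    show "integrable M (\<lambda>x. complex_of_real (cos_integrand a k x))" using assms(1) by (rule integrable_of_real)
    have "integrable M (\<lambda>x. complex_of_real (sin_integrand a k x))" using assms(2) by (rule integrable_of_real)
    then show "integrable M (\<lambda>x. \<i> * complex_of_real (sin_integrand a k x))" by (rule Bochner_Integration.integrable_mult_right)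
  qed
  have B: "(\<lambda>x. of_real (cos_integrand a k x) + \<i> * of_real (sin_integrand a k x))
      = (\<lambda>x. exp (\<i> * of_real (num_arg k x)) * of_real (1 / denom a k x))"
    by (auto simp: fun_eq_iff complex_eq_iff Qc_Re[symmetric] Qc_Im[symmetric] simp del: Qc_Re Qc_Im)
  show ?thesis using A unfolding B .
qed


lemma fixed_k:
  fixes a :: real
  assumes a: "a > 0" and k: "k \<ge> 1"
    and hc: "improper_convergent k (cos_integrand a k)"
    and hs: "improper_convergent k (sin_integrand a k)"
  shows "improper_integral k (cos_integrand a k)
           = integral\<^sup>L lborel (\<lambda>t. indicator {0..} t * (\<Prod>m<k. 1 / (1 + (t / (a + real m))^2)))"
    and "improper_integral k (sin_integrand a k) = 0"
proof -
  have ic: "\<And>R. R \<ge> 0 \<Longrightarrow> integrable (cube k R) (cos_integrand a k)"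
    using hc unfolding improper_convergent_def by auto
  have isn: "\<And>R. R \<ge> 0 \<Longrightarrow> integrable (cube k R) (sin_integrand a k)"
    using hs unfolding improper_convergent_def by auto
  have eqR: "integral\<^sup>L (cube k R) (cos_integrand a k) = integral\<^sup>L lborel (\<lambda>t. indicator {0..} t * Phi a k t R)
      \<and> integral\<^sup>L (cube k R) (sin_integrand a k) = 0" if R: "R \<ge> 0" for R
  proof -
    have iq: "integrable (cube k R) (\<lambda>x. exp (\<i> * of_real (num_arg k x)) * of_real (1 / denom a k x))"
      using ic[OF R] isn[OF R] by (rule Qc_int)
    have ce: "integral\<^sup>L (cube k R) (\<lambda>x. exp (\<i> * of_real (num_arg k x)) * of_real (1 / denom a k x))
       = of_real (integral\<^sup>L lborel (\<lambda>t. indicator {0..} t * Phi a k t R))"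
      by (rule cube_eq[OF k a R iq])
    have "integral\<^sup>L (cube k R) (cos_integrand a k)
        = integral\<^sup>L (cube k R) (\<lambda>x. Re (exp (\<i> * of_real (num_arg k x)) * of_real (1 / denom a k x)))"
      by (simp only: Qc_Re)
    also have "\<dots> = Re (integral\<^sup>L (cube k R) (\<lambda>x. exp (\<i> * of_real (num_arg k x)) * of_real (1 / denom a k x)))"
      using iq by (rule integral_Re)
    also have "\<dots> = integral\<^sup>L lborel (\<lambda>t. indicator {0..} t * Phi a k t R)"
      unfolding ce by simp
    finally have 1: "integral\<^sup>L (cube k R) (cos_integrand a k) = integral\<^sup>L lborel (\<lambda>t. indicator {0..} t * Phi a k t R)" .
    have "integral\<^sup>L (cube k R) (sin_integrand a k)
        = integral\<^sup>L (cube k R) (\<lambda>x. Im (exp (\<i> * of_real (num_arg k x)) * of_real (1 / denom a k x)))"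
      by (simp only: Qc_Im)
    also have "\<dots> = Im (integral\<^sup>L (cube k R) (\<lambda>x. exp (\<i> * of_real (num_arg k x)) * of_real (1 / denom a k x)))"
      using iq by (rule integral_Im)
    also have "\<dots> = 0"
      unfolding ce by simp
    finally show ?thesis using 1 by simp
  qed
  have lc: "((\<lambda>R. integral\<^sup>L (cube k R) (cos_integrand a k))
     \<longlongrightarrow> integral\<^sup>L lborel (\<lambda>t. indicator {0..} t * (\<Prod>m<k. 1 / (1 + (t / (a + real m))^2)))) at_top"
  proof (rule Lim_transform_eventually[OF R_lim[OF a k]])
    show "\<forall>\<^sub>F R in at_top. integral\<^sup>L lborel (\<lambda>t. indicator {0..} t * Phi a k t R) = integral\<^sup>L (cube k R) (cos_integrand a k)"
      using eventually_ge_at_top[of "0::real"] by eventually_elim (simp add: eqR)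
  qed
  have ls: "((\<lambda>R. integral\<^sup>L (cube k R) (sin_integrand a k)) \<longlongrightarrow> 0) at_top"
  proof (rule Lim_transform_eventually[OF tendsto_const])
    show "\<forall>\<^sub>F R in at_top. 0 = integral\<^sup>L (cube k R) (sin_integrand a k)"
      using eventually_ge_at_top[of "0::real"] by eventually_elim (simp add: eqR)
  qed
  show "improper_integral k (cos_integrand a k)
           = integral\<^sup>L lborel (\<lambda>t. indicator {0..} t * (\<Prod>m<k. 1 / (1 + (t / (a + real m))^2)))"
    unfolding improper_integral_def by (rule tendsto_Lim[OF trivial_limit_at_top_linorder lc])
  show "improper_integral k (sin_integrand a k) = 0"
    unfolding improper_integral_def by (rule tendsto_Lim[OF trivial_limit_at_top_linorder ls])
qed

theorem theorem4p2:
  fixes a :: real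
  assumes "a > 0"
    and "\<And>k. k \<ge> 1 \<Longrightarrow> improper_convergent k (cos_integrand a k)"
    and "\<And>k. k \<ge> 1 \<Longrightarrow> improper_convergent k (sin_integrand a k)"
  shows "(\<lambda>k. improper_integral k (cos_integrand a k))
           \<longlonglongrightarrow> 1/2 * sqrt pi * Gamma (a + 1/2) / Gamma a
         \<and> (\<forall>k\<ge>1. improper_integral k (sin_integrand a k) = 0)"
proof
  have e: "improper_integral (Suc n) (cos_integrand a (Suc n)) = (pochhammer a (Suc n))^2 * Kc a n" for n
    using fixed_k(1)[OF assms(1) _ assms(2) assms(3), of "Suc n"] Ival[OF assms(1), of n] by simp
  have "(\<lambda>n. improper_integral (Suc n) (cos_integrand a (Suc n))) \<longlonglongrightarrow> 1/2 * sqrt pi * Gamma (a + 1/2) / Gamma a"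
    unfolding e by (rule lim_main[OF assms(1)])
  then show "(\<lambda>k. improper_integral k (cos_integrand a k)) \<longlonglongrightarrow> 1/2 * sqrt pi * Gamma (a + 1/2) / Gamma a"
    by (rule LIMSEQ_imp_Suc)
  show "\<forall>k\<ge>1. improper_integral k (sin_integrand a k) = 0"
    using fixed_k(2)[OF assms(1) _ assms(2) assms(3)] by blast
qed

end
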